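(* Let $\alpha,\beta$ be sets, $z\in\beta$, $\mathit{seq}:\beta\times\alpha\to\beta$ and $\mathit{comb}:\beta\times\beta\to\beta$, written $x\oplus y=\mathit{comb}(x,y)$. Let $\Gamma=\{\mathrm{foldl}(\mathit{seq},z,L) : L \text{ a finite list over }\alpha\}$. Then calls $\mathrm{aggregate}(z,\mathit{seq},\mathit{comb},\mathit{rdd})$ have deterministic outcomes if and only if (1) $(\Gamma,\oplus,z)$ is a commutative monoid (i.e. $\oplus$ maps $\Gamma\times\Gamma$ into $\Gamma$, is associative and commutative on $\Gamma$, with identity $z$ on $\Gamma$), and (2) for all $d\in\alpha$ and $e\in\Gamma$, $\mathit{seq}(e,d)=e\oplus\mathit{seq}(z,d)$.
   Context: Lists are finite; $\mathbin{+\!\!+}$ is list concatenation. For $f:B\times A\to B$, $b\in B$: $\mathrm{foldl}(f,b,[\,])=b$ and $\mathrm{foldl}(f,b,[x_1,\dots,x_n])=f(\cdots f(f(b,x_1),x_2)\cdots,x_n)$. An RDD over $\alpha$ is a list of lists over $\alpha$. A partitioning is a function $P$ sending each list $L$ over $\alpha$ to an RDD obtained by splitting $L$ into consecutive (possibly empty) pieces $p_1,\dots,p_n$ with $p_1\mathbin{+\!\!+}\cdots\mathbin{+\!\!+}p_n=L$ and then arbitrarily permuting $[p_1,\dots,p_n]$. Define $\mathrm{aggregate}_{\mathrm{det}}(z,\mathit{seq},\mathit{comb},[q_1,\dots,q_m])=\mathrm{foldl}(\mathit{comb},z,[\mathrm{foldl}(\mathit{seq},z,q_1),\dots,\mathrm{foldl}(\mathit{seq},z,q_m)])$.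 Calls $\mathrm{aggregate}(z,\mathit{seq},\mathit{comb},\mathit{rdd})$ have deterministic outcomes if $\mathrm{aggregate}_{\mathrm{det}}(z,\mathit{seq},\mathit{comb},P(L))=\mathrm{foldl}(\mathit{seq},z,L)$ for all lists $L$ over $\alpha$ and all partitionings $P$. *)

theory Defs
  imports Main "HOL-Library.Multiset"
begin

definition is_partitioning :: "('a list \<Rightarrow> 'a list list) \<Rightarrow> bool" where
  "is_partitioning P \<longleftrightarrow>
     (\<forall>L. \<exists>ps. concat ps = L \<and> mset (P L) = mset ps)"

definition aggregate_det ::
  "'b \<Rightarrow> ('b \<Rightarrow> 'a \<Rightarrow> 'b) \<Rightarrow> ('b \<Rightarrow> 'b \<Rightarrow> 'b) \<Rightarrow> 'a list list \<Rightarrow> 'b" where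
  "aggregate_det z seq comb qs = foldl comb z (map (foldl seq z) qs)"

definition deterministic ::
  "'b \<Rightarrow> ('b \<Rightarrow> 'a \<Rightarrow> 'b) \<Rightarrow> ('b \<Rightarrow> 'b \<Rightarrow> 'b) \<Rightarrow> bool" where
  "deterministic z seq comb \<longleftrightarrow>
     (\<forall>P. is_partitioning P \<longrightarrow> (\<forall>L. aggregate_det z seq comb (P L) = foldl seq z L))"

definition Gamma :: "'b \<Rightarrow> ('b \<Rightarrow> 'a \<Rightarrow> 'b) \<Rightarrow> 'b set" where
  "Gamma z seq = {foldl seq z L | L. True}"

definition comm_monoid_on :: "'b set \<Rightarrow> ('b \<Rightarrow> 'b \<Rightarrow> 'b) \<Rightarrow> 'b \<Rightarrow> bool" where
  "comm_monoid_on G f e \<longleftrightarrow>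
     e \<in> G \<and>
     (\<forall>x\<in>G. \<forall>y\<in>G. f x y \<in> G) \<and>
     (\<forall>x\<in>G. \<forall>y\<in>G. \<forall>w\<in>G. f (f x y) w = f x (f y w)) \<and>
     (\<forall>x\<in>G. \<forall>y\<in>G. f x y = f y x) \<and>
     (\<forall>x\<in>G. f e x = x \<and> f x e = x)"

end

theory Submission
  imports Defs
begin

lemma det_use:
  assumes "deterministic z seq comb" "mset ps' = mset ps"
  shows "foldl comb z (map (foldl seq z) ps') = foldl seq z (concat ps)"
proof -
  define P where "P = (\<lambda>L'. if L' = concat ps then ps' else [L'])"
  have "is_partitioning P"
    unfolding is_partitioning_def P_def
  proof
    fix L show "\<exists>qs. concat qs = L \<and> mset (if L = concat ps then ps' else [L]) = mset qs"
      using assms(2) by (cases "L = concat ps") auto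
  qed
  then have "aggregate_det z seq comb (P (concat ps)) = foldl seq z (concat ps)"
    using assms(1) unfolding deterministic_def by blast
  then show ?thesis unfolding aggregate_det_def P_def by simp
qed


theorem corollary1:
  fixes z :: 'b and seq :: "'b \<Rightarrow> 'a \<Rightarrow> 'b" and comb :: "'b \<Rightarrow> 'b \<Rightarrow> 'b"
  shows "deterministic z seq comb \<longleftrightarrow>
           (comm_monoid_on (Gamma z seq) comb z \<and>
            (\<forall>d. \<forall>e\<in>Gamma z seq. seq e d = comb e (seq z d)))"
proof
  let ?g = "foldl seq z"
  assume D: "deterministic z seq comb"
  have one: "comb z (?g A) = ?g A" for A
    using det_use[OF D, of "[A]" "[A]"] by simp
  have two: "comb (?g A) (?g B) = ?g (A @ B)" for A B
    using det_use[OF D, of "[A,B]" "[A,B]"] one by simp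
  have comm: "comb (?g B) (?g A) = ?g (A @ B)" for A B
    using det_use[OF D, of "[B,A]" "[A,B]"] one by simp
  have rid: "comb (?g A) z = ?g A" for A
    using two[of A "[]"] by simp
  show "comm_monoid_on (Gamma z seq) comb z \<and>
            (\<forall>d. \<forall>e\<in>Gamma z seq. seq e d = comb e (seq z d))"
    unfolding comm_monoid_on_def Gamma_def
  proof (intro conjI ballI allI)
    show "z \<in> {?g L |L. True}" by (rule CollectI, rule exI[of _ "[]"]) simp
  next
    fix x y assume "x \<in> {?g L |L. True}" "y \<in> {?g L |L. True}"
    then obtain A B where "x = ?g A" "y = ?g B" by auto
    then show "comb x y \<in> {?g L |L. True}" "comb x y = comb y x"
      using two comm by (auto simp del: foldl_append)
  next
    fix x y w assume "x \<in> {?g L |L. True}" "y \<in> {?g L |L. True}" "w \<in> {?g L |L. True}"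
    then obtain A B C where "x = ?g A" "y = ?g B" "w = ?g C" by auto
    then show "comb (comb x y) w = comb x (comb y w)"
      using two by (simp del: foldl_append)
  next
    fix x assume "x \<in> {?g L |L. True}"
    then obtain A where "x = ?g A" by auto
    then show "comb z x = x" "comb x z = x" using one rid by auto
  next
    fix d e assume "e \<in> {?g L |L. True}"
    then obtain A where "e = ?g A" by auto
    then show "seq e d = comb e (seq z d)" using two[of A "[d]"] by simp
  qed
next
  let ?g = "foldl seq z"
  let ?G = "Gamma z seq"
  assume H: "comm_monoid_on ?G comb z \<and> (\<forall>d. \<forall>e\<in>?G. seq e d = comb e (seq z d))"
  have inG: "?g A \<in> ?G" for A unfolding Gamma_def by blast
  have cl: "\<And>x y. x \<in> ?G \<Longrightarrow> y \<in> ?G \<Longrightarrow> comb x y \<in> ?G"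
    and asc: "\<And>x y w. x \<in> ?G \<Longrightarrow> y \<in> ?G \<Longrightarrow> w \<in> ?G \<Longrightarrow> comb (comb x y) w = comb x (comb y w)"
    and cm: "\<And>x y. x \<in> ?G \<Longrightarrow> y \<in> ?G \<Longrightarrow> comb x y = comb y x"
    and lid: "\<And>x. x \<in> ?G \<Longrightarrow> comb z x = x"
    and rid: "\<And>x. x \<in> ?G \<Longrightarrow> comb x z = x"
    using H unfolding comm_monoid_on_def by blast+
  have sq: "\<And>d e. e \<in> ?G \<Longrightarrow> seq e d = comb e (seq z d)" using H by blast
  have app: "?g (A @ B) = comb (?g A) (?g B)" for A B
  proof (induction B rule: rev_induct)
    case Nil then show ?case using rid[OF inG] by simp
  next
    case (snoc d B)
    have "?g (A @ B @ [d]) = seq (?g (A @ B)) d" by simp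
    also have "\<dots> = comb (?g (A @ B)) (?g [d])" using sq[OF inG[of "A @ B"], of d] by (simp del: foldl_append)
    also have "\<dots> = comb (comb (?g A) (?g B)) (?g [d])" using snoc by simp
    also have "\<dots> = comb (?g A) (comb (?g B) (?g [d]))" using asc inG by blast
    also have "comb (?g B) (?g [d]) = ?g (B @ [d])" using sq[OF inG[of B], of d] by simp
    finally show ?case by simp
  qed
  have fc: "foldl comb z (map ?g ps) = ?g (concat ps)" for ps
  proof (induction ps rule: rev_induct)
    case Nil then show ?case by simp
  next
    case (snoc p ps) then show ?case using app by simp
  qed
  have rem: "x \<in> set qs \<Longrightarrow> ?g (concat qs) = comb (?g x) (?g (concat (remove1 x qs)))" for x qs
  proof (induction qs)
    case Nil then show ?case by simp
  next
    case (Cons q qs)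
    show ?case
    proof (cases "x = q")
      case True then show ?thesis using app by simp
    next
      case False
      then have "x \<in> set qs" using Cons by simp
      then have "?g (concat (q # qs)) = comb (?g q) (comb (?g x) (?g (concat (remove1 x qs))))"
        using Cons app by simp
      also have "\<dots> = comb (?g x) (comb (?g q) (?g (concat (remove1 x qs))))"
        using asc cm inG by metis
      finally show ?thesis using False app by simp
    qed
  qed
  have perm: "mset ps = mset qs \<Longrightarrow> ?g (concat ps) = ?g (concat qs)" for ps qs
  proof (induction ps arbitrary: qs)
    case Nil then show ?case by simp
  next
    case (Cons p ps)
    have pin: "p \<in> set qs" using Cons.prems by (metis list.set_intros(1) set_mset_mset)
    have "mset ps = mset (remove1 p qs)" using Cons.prems by (simp flip: Cons.prems)
    then have "?g (concat ps) = ?g (concat (remove1 p qs))" using Cons.IH by blast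
    then show ?case using rem[OF pin] app by simp
  qed
  show "deterministic z seq comb"
    unfolding deterministic_def is_partitioning_def aggregate_det_def
  proof (intro allI impI)
    fix P :: "'a list \<Rightarrow> 'a list list" and L
    assume "\<forall>L. \<exists>ps. concat ps = L \<and> mset (P L) = mset ps"
    then obtain ps where "concat ps = L" "mset (P L) = mset ps" by blast
    then show "foldl comb z (map ?g (P L)) = ?g L" using fc perm by metis
  qed
qed

end
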